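(* For integers $m\ge1$, $n\ge2$ and real $\alpha\notin\pi\mathbb{Z}$, $$\sum_{k=0}^{n-1}\cot^m\frac{\alpha+k\pi}{n}=(-1)^{m/2}\,n\,\mathbb{1}_{m\text{ even}}+\frac{1}{(m-1)!}\sum_{k=1}^m n^kA_m^{(k)}P_{k-1}(\cot\alpha).$$
   Context: The arctangent numbers $A_m^{(k)}$ are defined by $\frac{(\arctan z)^k}{k!}=\sum_{m\ge k}\frac{A_m^{(k)}}{m!}z^m$. The derivative polynomials $P_k$ are defined by $P_0(x)=x$, $P_{k+1}(x)=(1+x^2)P_k'(x)$, equivalently $\frac{d^k}{dz^k}\tan z=P_k(\tan z)$. $\mathbb{1}_{m\text{ even}}$ is $1$ if $m$ is even and $0$ otherwise. *)

theory Defs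
  imports "HOL-Analysis.Analysis" "HOL-Computational_Algebra.Polynomial"
begin

text \<open>Arctangent numbers: A m k is m! times the coefficient of z^m in the Taylor
  expansion of (arctan z)^k / k! at 0, i.e. the m-th derivative at 0.\<close>
definition arctan_number :: "nat \<Rightarrow> nat \<Rightarrow> real" where
  "arctan_number m k = (deriv ^^ m) (\<lambda>x. (arctan x) ^ k / fact k) 0"

fun deriv_poly :: "nat \<Rightarrow> real poly" where
  "deriv_poly 0 = [:0, 1:]"
| "deriv_poly (Suc k) = [:1, 0, 1:] * pderiv (deriv_poly k)"

end

theory Submission
  imports Defs
begin


fun Cn :: "nat \<Rightarrow> (real \<Rightarrow> real) \<Rightarrow> bool" where
  "Cn 0 f = True"
| "Cn (Suc n) f = ((\<forall>x. DERIV f x :> deriv f x) \<and> Cn n (deriv f))"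

lemma deriv_eqI: "(\<And>x. DERIV f x :> f' x) \<Longrightarrow> deriv f = f'"
  by (rule ext) (simp add: DERIV_imp_deriv)

lemma Cn_mono: "Cn (Suc n) f \<Longrightarrow> Cn n f"
  by (induction n arbitrary: f) auto


lemma Cn_add: "Cn n f \<Longrightarrow> Cn n g \<Longrightarrow> Cn n (\<lambda>x. f x + g x)"
proof (induction n arbitrary: f g)
  case (Suc n)
  have d: "deriv (\<lambda>x. f x + g x) = (\<lambda>x. deriv f x + deriv g x)"
    using Suc.prems by (intro deriv_eqI) (auto intro!: derivative_eq_intros)
  show ?case using Suc by (auto simp: d intro!: derivative_eq_intros)
qed simp

lemma Cn_mult: "Cn n f \<Longrightarrow> Cn n g \<Longrightarrow> Cn n (\<lambda>x. f x * g x)"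
proof (induction n arbitrary: f g)
  case (Suc n)
  have d: "deriv (\<lambda>x. f x * g x) = (\<lambda>x. deriv f x * g x + f x * deriv g x)"
    using Suc.prems by (intro deriv_eqI) (auto intro!: derivative_eq_intros)
  have "Cn n (\<lambda>x. deriv f x * g x + f x * deriv g x)"
    using Suc Cn_mono[of n f] Cn_mono[of n g] by (intro Cn_add Suc.IH) auto
  then show ?case using Suc.prems by (auto simp: d intro!: derivative_eq_intros)
qed simp

lemma Cn_poly: "Cn n (poly p)"
proof (induction n arbitrary: p)
  case (Suc n)
  have d: "deriv (poly p) = poly (pderiv p)"
    by (intro deriv_eqI) (rule poly_DERIV)
  show ?case using Suc by (simp add: d)
qed simp

lemma Cn_const: "Cn n (\<lambda>x. c)"
proof -
  have "poly [:c:] = (\<lambda>x. c)" by (rule ext) simp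
  thus ?thesis using Cn_poly[of n "[:c:]"] by simp
qed

definition smooth :: "(real \<Rightarrow> real) \<Rightarrow> bool" where
  "smooth f = (\<forall>n. Cn n f)"

lemma smooth_deriv: "smooth f \<Longrightarrow> smooth (deriv f)"
  unfolding smooth_def by (metis Cn.simps(2))

lemma smooth_DERIV: "smooth f \<Longrightarrow> DERIV f x :> deriv f x"
  unfolding smooth_def by (metis Cn.simps(2))

lemma smooth_higher: "smooth f \<Longrightarrow> smooth ((deriv ^^ j) f)"
  by (induction j) (auto intro: smooth_deriv)

lemma smooth_DERIV_higher: "smooth f \<Longrightarrow> DERIV ((deriv ^^ j) f) x :> (deriv ^^ Suc j) f x"
  using smooth_DERIV[OF smooth_higher] by simp

lemma Cn_inverse:
  assumes "smooth h" "\<And>x. h x \<noteq> 0"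
  shows "Cn n (\<lambda>x. inverse (h x))"
proof (induction n)
  case (Suc n)
  have D: "DERIV (\<lambda>x. inverse (h x)) x :> - (deriv h x * (inverse (h x) * inverse (h x)))" for x
    using smooth_DERIV[OF assms(1)] assms(2) by (auto intro!: derivative_eq_intros simp: power2_eq_square)
  hence d: "deriv (\<lambda>x. inverse (h x)) = (\<lambda>x. - (deriv h x * (inverse (h x) * inverse (h x))))"
    by (intro deriv_eqI)
  have "Cn n (\<lambda>x. - (deriv h x * (inverse (h x) * inverse (h x))))"
  proof -
    have "Cn n (\<lambda>x. (- 1) * (deriv h x * (inverse (h x) * inverse (h x))))"
      using smooth_deriv[OF assms(1)] Suc.IH unfolding smooth_def
      by (intro Cn_mult Cn_const) auto
    thus ?thesis by simp
  qed
  then show ?case using D d by (simp add: DERIV_imp_deriv)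
qed simp

lemma smooth_arctan: "smooth arctan"
  unfolding smooth_def
proof
  fix n
  have d: "deriv arctan = (\<lambda>x. inverse (poly [:1,0,1:] x))"
    by (intro deriv_eqI) (simp add: DERIV_arctan[unfolded power2_eq_square])
  have nz: "poly [:1,0,1:] x \<noteq> 0" for x :: real
  proof -
    have "poly [:1,0,1:] x = 1 + x * x" by simp
    also have "\<dots> > 0" by (simp add: add_pos_nonneg)
    finally show ?thesis by simp
  qed
  have c: "Cn n (\<lambda>x. inverse (poly [:1,0,1:] x))"
    by (rule Cn_inverse) (unfold smooth_def, intro allI Cn_poly, rule nz)
  have "Cn (Suc n) arctan"
    unfolding Cn.simps d using c DERIV_arctan[unfolded power2_eq_square] by simp
  thus "Cn n arctan" by (rule Cn_mono)
qed

lemma smooth_a: "smooth (\<lambda>x. arctan x ^ k / fact k)"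
proof -
  have "Cn n (\<lambda>x. arctan x ^ k)" for n
  proof (induction k)
    case (Suc k)
    then show ?case using smooth_arctan unfolding smooth_def
      using Cn_mult[of n arctan "\<lambda>x. arctan x ^ k"] by simp
  qed (simp add: Cn_const)
  then have "Cn n (\<lambda>x. arctan x ^ k * (1 / fact k))" for n
    by (intro Cn_mult Cn_const)
  thus ?thesis unfolding smooth_def by simp
qed



lemma DERIV_eq: "DERIV f x :> D \<Longrightarrow> D = E \<Longrightarrow> DERIV f x :> E"
  by simp

lemma deriv3:
  fixes y K1 K2 :: real
  assumes "DERIV a y :> a'" "DERIV b y :> b'" "DERIV c y :> c'"
  shows "DERIV (\<lambda>y. (1+y*y) * a y + K1*y*b y + K2*c y) y :> (2*y) * a y + (1+y*y)*a' + K1*(b y + y*b') + K2*c'"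
proof -
  have 1: "DERIV (\<lambda>y. 1 + y*y) y :> 2*y" by (auto intro!: derivative_eq_intros)
  have 2: "DERIV (\<lambda>y. K1*y) y :> K1" by (auto intro!: derivative_eq_intros)
  note X = DERIV_add[OF DERIV_add[OF DERIV_mult[OF 1 assms(1)] DERIV_mult[OF 2 assms(2)]] DERIV_cmult[OF assms(3), of K2]]
  show ?thesis
    by (rule DERIV_eq[OF X]) (simp add: algebra_simps)
qed

lemma leib:
  assumes g: "smooth g"
  shows "(deriv^^m) (\<lambda>y. (1+y*y) * g y) = (\<lambda>y. (1+y*y) * (deriv^^m) g y
     + 2*real m*y*(deriv^^(m-1)) g y + real m*(real m - 1)*(deriv^^(m-2)) g y)"
proof (induction m)
  case 0
  then show ?case by simp
next
  case (Suc m)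
  let ?D = "\<lambda>j. (deriv^^j) g"
  have DD: "\<And>j x. DERIV (?D j) x :> deriv (?D j) x" using smooth_DERIV_higher[OF g] by simp
  have X: "DERIV (\<lambda>y. (1+y*y) * ?D m y + 2*real m*y*?D (m-1) y + real m*(real m - 1)*?D (m-2) y) y :>
     (2*y) * ?D m y + (1+y*y) * ?D (Suc m) y + 2*real m*(?D (m-1) y + y * ?D (Suc (m-1)) y)
      + real m*(real m - 1)*?D (Suc (m-2)) y" for y
    using deriv3[OF DD[of m y] DD[of "m-1" y] DD[of "m-2" y], of "2*real m" "real m*(real m - 1)"]
    by (simp add: algebra_simps)
  have Y: "(2*y) * ?D m y + (1+y*y) * ?D (Suc m) y + 2*real m*(?D (m-1) y + y * ?D (Suc (m-1)) y)
      + real m*(real m - 1)*?D (Suc (m-2)) y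
     = (1+y*y) * ?D (Suc m) y + 2*real (Suc m)*y*?D (Suc m - 1) y + real (Suc m)*(real (Suc m) - 1)*?D (Suc m - 2) y" for y
  proof (cases m)
    case 0 then show ?thesis by simp
  next
    case (Suc k) note sk = this
    show ?thesis
    proof (cases k)
      case 0 then show ?thesis using sk by (simp add: algebra_simps)
    next
      case (Suc l) then show ?thesis using sk by (simp add: algebra_simps)
    qed
  qed
  have "deriv (\<lambda>y. (1+y*y) * ?D m y + 2*real m*y*?D (m-1) y + real m*(real m - 1)*?D (m-2) y)
     = (\<lambda>y. (1+y*y) * ?D (Suc m) y + 2*real (Suc m)*y*?D (Suc m - 1) y + real (Suc m)*(real (Suc m) - 1)*?D (Suc m - 2) y)"
    by (intro deriv_eqI DERIV_eq[OF X Y])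
  then show ?case using Suc.IH by simp
qed

abbreviation "A \<equiv> arctan_number"

lemma A_rec: "A (Suc m) (Suc k) = A m k - real m * (real m - 1) * A (m-1) (Suc k)"
proof -
  define f where "f = (\<lambda>x::real. arctan x ^ Suc k / fact (Suc k))"
  have sf: "smooth f" unfolding f_def by (rule smooth_a)
  have df: "DERIV f x :> arctan x ^ k / fact k * inverse (1 + x*x)" for x
  proof -
    have X: "DERIV f x :> real (Suc k) * arctan x ^ k * inverse (1 + x\<^sup>2) / fact (Suc k)"
      unfolding f_def using DERIV_chain2[OF DERIV_pow DERIV_arctan, of "Suc k" x]
      by (intro DERIV_cdivide) (simp add: algebra_simps)
    show ?thesis
      by (rule DERIV_eq[OF X]) (simp add: fact_Suc power2_eq_square del: of_nat_Suc)
  qed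
  hence dd: "deriv f = (\<lambda>x. arctan x ^ k / fact k * inverse (1 + x*x))" by (intro deriv_eqI)
  have nz: "(1 + x*x) \<noteq> 0" for x :: real
    by (metis add_nonneg_eq_0_iff zero_le_one zero_le_square zero_neq_one)
  have e: "(\<lambda>y. (1+y*y) * deriv f y) = (\<lambda>x. arctan x ^ k / fact k)"
  proof (rule ext)
    fix y :: real
    show "(1+y*y) * deriv f y = arctan y ^ k / fact k"
      unfolding dd using nz[of y] by (metis mult.left_commute mult.right_neutral right_inverse)
  qed
  have "A m k = (deriv^^m) (\<lambda>y. (1+y*y) * deriv f y) 0"
    unfolding arctan_number_def e ..
  also have "\<dots> = (deriv^^m) (deriv f) 0 + real m * (real m - 1) * (deriv^^(m-2)) (deriv f) 0"
    unfolding leib[OF smooth_deriv[OF sf]] by simp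
  also have "(deriv^^m) (deriv f) = (deriv^^(Suc m)) f"
    by (simp add: funpow_Suc_right del: funpow.simps)
  also have "real m * (real m - 1) * (deriv^^(m-2)) (deriv f) 0 = real m * (real m - 1) * (deriv^^(m-1)) f 0"
  proof (cases "m \<ge> 2")
    case True
    then have "m - 1 = Suc (m-2)" by simp
    then show ?thesis by (simp add: funpow_Suc_right del: funpow.simps)
  next
    case False
    then have "m = 0 \<or> m = 1" by auto
    then show ?thesis by auto
  qed
  finally show ?thesis unfolding arctan_number_def f_def by simp
qed

lemma A_0k: "A 0 k = (if k = 0 then 1 else 0)"
  by (simp add: arctan_number_def)

lemma A_m0: "A (Suc m) 0 = 0"
proof -
  have "(deriv^^m) (\<lambda>x::real. 0::real) = (\<lambda>x. 0)" by (induction m) auto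
  thus ?thesis by (simp add: arctan_number_def funpow_Suc_right del: funpow.simps)
qed

lemma A_vanish: "m < k \<Longrightarrow> A m k = 0"
proof (induction m arbitrary: k rule: less_induct)
  case (less m)
  show ?case
  proof (cases m)
    case 0 then show ?thesis using less.prems by (simp add: A_0k)
  next
    case (Suc m')
    then obtain k' where k: "k = Suc k'" using less.prems by (cases k) auto
    have "A m' k' = 0" using less Suc k by auto
    moreover have "A (m'-1) (Suc k') = 0" using less Suc k by auto
    ultimately show ?thesis using Suc k A_rec by simp
  qed
qed



definition Gp :: "nat \<Rightarrow> nat \<Rightarrow> real poly" where
  "Gp m N = (\<Sum>j<N. smult (A m (Suc j)) (deriv_poly j))"

definition cc :: "nat \<Rightarrow> real" where
  "cc m = (if even m then (-1)^(m div 2) else 0)"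

lemma cc_SS: "cc (Suc (Suc m)) = - cc m"
  by (simp add: cc_def)

lemma smult_sum_r: "smult c (\<Sum>i\<in>S. f i) = (\<Sum>i\<in>S. smult c (f i))"
  by (induct S rule: infinite_finite_induct) (auto simp: smult_add_right)

lemma pderiv_sum': "pderiv (\<Sum>i\<in>S. f i) = (\<Sum>i\<in>S. pderiv (f i))"
  by (induct S rule: infinite_finite_induct) (auto simp: pderiv_add)

lemma Gp_ext: "Gp m (m + d) = Gp m m"
proof (induction d)
  case (Suc d)
  have "A m (Suc (m + d)) = 0" by (rule A_vanish) simp
  then show ?case using Suc by (simp add: Gp_def)
qed simp

lemma Gp_ext': "N \<ge> m \<Longrightarrow> Gp m N = Gp m m"
  using Gp_ext[of m "N - m"] by simp

lemma Gp_rec: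
  assumes "m \<ge> 1"
  shows "Gp (Suc m) (Suc N) = [:1,0,1:] * pderiv (Gp m N) - smult (real m * (real m - 1)) (Gp (m-1) (Suc N))"
proof -
  have "Gp (Suc m) (Suc N) = (\<Sum>j<Suc N. smult (A m j) (deriv_poly j) - smult (real m * (real m - 1)) (smult (A (m-1) (Suc j)) (deriv_poly j)))"
    unfolding Gp_def by (simp add: A_rec smult_diff_left)
  also have "\<dots> = (\<Sum>j<Suc N. smult (A m j) (deriv_poly j)) - smult (real m * (real m - 1)) (Gp (m-1) (Suc N))"
    unfolding Gp_def by (simp only: sum_subtractf smult_sum_r smult_smult)
  also have "(\<Sum>j<Suc N. smult (A m j) (deriv_poly j)) = smult (A m 0) (deriv_poly 0) + (\<Sum>j<N. smult (A m (Suc j)) (deriv_poly (Suc j)))"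
    by (rule sum.lessThan_Suc_shift)
  also have "A m 0 = 0" using assms A_m0[of "m-1"] by simp
  also have "(\<Sum>j<N. smult (A m (Suc j)) (deriv_poly (Suc j))) = [:1,0,1:] * pderiv (Gp m N)"
    unfolding Gp_def by (simp add: pderiv_sum' pderiv_smult sum_distrib_left)
  finally show ?thesis by simp
qed

lemma Gthm: "m \<ge> 1 \<Longrightarrow> N \<ge> m \<Longrightarrow> Gp m N = smult (fact (m-1)) (monom 1 m - [:cc m:])"
proof (induction m arbitrary: N rule: less_induct)
  case (less m)
  show ?case
  proof (cases "m = 1")
    case True
    have "A 1 1 = 1" using A_rec[of 0 0] by (simp add: A_0k)
    then have "Gp 1 1 = [:0, 1:]" by (simp add: Gp_def)
    moreover have "monom (1::real) 1 - [:cc 1:] = [:0,1:]"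
      by (simp add: cc_def monom_Suc)
    moreover have "Gp 1 N = Gp 1 1" using True less.prems by (intro Gp_ext') simp
    ultimately show ?thesis using True by simp
  next
    case False
    then obtain m' where m': "m = Suc m'" "m' \<ge> 1" using less.prems by (cases m) auto
    obtain N' where N': "N = Suc N'" "N' \<ge> m'" using less.prems m' by (cases N) auto
    have IH1: "Gp m' N' = smult (fact (m'-1)) (monom 1 m' - [:cc m':])"
      using less.IH[of m' N'] m' N' by simp
    have pd: "pderiv (Gp m' N') = smult (fact (m'-1) * real m') (monom 1 (m'-1))"
      unfolding IH1 by (simp add: pderiv_smult pderiv_diff pderiv_monom pderiv_pCons smult_monom)
    show ?thesis
    proof (cases "m' = 1")
      case True
      have "Gp m N = [:1,0,1:] * pderiv (Gp m' N')"
        using Gp_rec[of m' N'] m' N' True by simp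
      also have "\<dots> = smult (fact (m-1)) (monom 1 m - [:cc m:])"
        unfolding pd using True m'
        by (intro poly_eq_poly_eq_iff[THEN iffD1] ext) (simp add: poly_monom cc_def power2_eq_square)
      finally show ?thesis .
    next
      case False
      then obtain l where l: "m' = Suc (Suc l)" using m' by (cases m'; cases "m' - 1") auto
      have IH2: "Gp (m'-1) N = smult (fact (m'-2)) (monom 1 (m'-1) - [:cc (m'-1):])"
        using less.IH[of "m'-1" N] m' N' l by simp
      have "Gp m N = [:1,0,1:] * pderiv (Gp m' N') - smult (real m' * (real m' - 1)) (Gp (m'-1) (Suc N'))"
        using Gp_rec[of m' N'] m' N' by simp
      also have "\<dots> = smult (fact (m-1)) (monom 1 m - [:cc m:])"
        unfolding pd IH2[unfolded N'] using l m'
        apply (intro poly_eq_poly_eq_iff[THEN iffD1] ext)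
        apply (simp only: poly_diff poly_mult poly_smult poly_monom poly_pCons l cc_SS)
        apply (simp add: fact_Suc algebra_simps)
        done
      finally show ?thesis .
    qed
  qed
qed



lemma cot_exp:
  fixes \<theta> :: real
  assumes "sin \<theta> \<noteq> 0"
  shows "exp (2 * \<i> * of_real \<theta>) \<noteq> 1"
    and "complex_of_real (cot \<theta>) = \<i> * (exp (2 * \<i> * of_real \<theta>) + 1) / (exp (2 * \<i> * of_real \<theta>) - 1)"
proof -
  define e where "e = exp (\<i> * complex_of_real \<theta>)"
  have e0: "e \<noteq> 0" unfolding e_def by simp
  have z: "exp (2 * \<i> * of_real \<theta>) = e * e"
    unfolding e_def by (simp add: exp_add[symmetric] algebra_simps)
  have ie: "exp (-(\<i> * complex_of_real \<theta>)) = inverse e" unfolding e_def by (simp add: exp_minus)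
  have c: "complex_of_real (cos \<theta>) = (e + inverse e) / 2"
    using cos_exp_eq[of "complex_of_real \<theta>"] ie by (simp add: cos_of_real e_def)
  have s: "complex_of_real (sin \<theta>) = (e - inverse e) / (2 * \<i>)"
    using sin_exp_eq[of "complex_of_real \<theta>"] ie by (simp add: sin_of_real e_def)
  have sn: "e - inverse e \<noteq> 0" using assms s by auto
  have ee: "e * e - 1 \<noteq> 0"
  proof
    assume "e * e - 1 = 0"
    then have "e - inverse e = (e * e - 1) / e" using e0 by (simp add: field_simps)
    with sn `e * e - 1 = 0` show False by simp
  qed
  show "exp (2 * \<i> * of_real \<theta>) \<noteq> 1" using ee z by simp
  have "complex_of_real (cot \<theta>) = complex_of_real (cos \<theta>) / complex_of_real (sin \<theta>)"
    by (simp add: cot_def)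
  also have "\<dots> = \<i> * (e * e + 1) / (e * e - 1)"
    unfolding c s using e0 ee sn by (simp add: field_simps)
  finally show "complex_of_real (cot \<theta>) = \<i> * (exp (2 * \<i> * of_real \<theta>) + 1) / (exp (2 * \<i> * of_real \<theta>) - 1)"
    using z by simp
qed

lemma sum_inv:
  fixes w \<zeta> :: complex
  assumes n: "n \<ge> 1" and zn: "\<zeta> ^ n = 1" and zj: "\<And>j. 0 < j \<Longrightarrow> j < n \<Longrightarrow> \<zeta> ^ j \<noteq> 1"
    and wn: "w ^ n \<noteq> 1"
  shows "(\<Sum>i<n. 1 / (1 - w * \<zeta> ^ i)) = of_nat n / (1 - w ^ n)"
proof -
  have zi: "(w * \<zeta> ^ i) ^ n = w ^ n" for i
    by (simp add: power_mult_distrib power_mult[symmetric] mult.commute[of i n] power_mult zn)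
  have z1: "w * \<zeta> ^ i \<noteq> 1" for i
  proof
    assume "w * \<zeta> ^ i = 1"
    then have "(w * \<zeta> ^ i) ^ n = 1" by simp
    with zi wn show False by simp
  qed
  have "1 / (1 - w * \<zeta> ^ i) = (\<Sum>j<n. (w * \<zeta> ^ i) ^ j) / (1 - w ^ n)" for i
  proof -
    have "(\<Sum>j<n. (w * \<zeta> ^ i) ^ j) = (1 - w ^ n) / (1 - w * \<zeta> ^ i)"
      using sum_gp_strict[of "w * \<zeta> ^ i" n] z1[of i] zi[of i] by simp
    moreover have "1 - w ^ n \<noteq> 0" "1 - w * \<zeta> ^ i \<noteq> 0" using wn z1[of i] by auto
    ultimately show ?thesis by (simp add: field_simps)
  qed
  hence "(\<Sum>i<n. 1 / (1 - w * \<zeta> ^ i)) = (\<Sum>i<n. \<Sum>j<n. (w * \<zeta> ^ i) ^ j) / (1 - w ^ n)"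
    by (simp add: sum_divide_distrib)
  also have "(\<Sum>i<n. \<Sum>j<n. (w * \<zeta> ^ i) ^ j) = (\<Sum>j<n. w ^ j * (\<Sum>i<n. (\<zeta> ^ j) ^ i))"
    by (subst sum.swap) (simp add: power_mult_distrib sum_distrib_left power_mult[symmetric] mult.commute)
  also have "\<dots> = (\<Sum>j<n. if j = 0 then of_nat n else 0)"
  proof (rule sum.cong[OF refl])
    fix j assume "j \<in> {..<n}"
    show "w ^ j * (\<Sum>i<n. (\<zeta> ^ j) ^ i) = (if j = 0 then of_nat n else 0)"
    proof (cases "j = 0")
      case False
      with `j \<in> {..<n}` have "\<zeta> ^ j \<noteq> 1" by (intro zj) auto
      moreover have "(\<zeta> ^ j) ^ n = 1" by (simp add: power_mult[symmetric] mult.commute[of j n] power_mult zn)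
      ultimately show ?thesis using False sum_gp_strict[of "\<zeta> ^ j" n] by simp
    qed simp
  qed
  also have "\<dots> = of_nat n" using n by (simp add: sum.delta)
  finally show ?thesis .
qed

lemma sin_theta:
  assumes "n \<ge> 1" "\<forall>j::int. \<alpha> \<noteq> of_int j * pi"
  shows "sin ((\<alpha> + real i * pi) / real n) \<noteq> 0"
proof
  assume "sin ((\<alpha> + real i * pi) / real n) = 0"
  then obtain k :: int where k: "(\<alpha> + real i * pi) / real n = of_int k * pi"
    by (auto simp: sin_zero_iff_int2)
  then have "\<alpha> = of_int (k * int n - int i) * pi" using assms(1) by (simp add: field_simps)
  with assms(2) show False by blast
qed

lemma sum_cot:
  assumes n: "n \<ge> 1" and a: "\<forall>j::int. \<alpha> \<noteq> of_int j * pi"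
  shows "(\<Sum>i<n. cot ((\<alpha> + real i * pi) / real n)) = real n * cot \<alpha>"
proof -
  define w where "w = exp (2 * \<i> * complex_of_real (\<alpha> / n))"
  define \<zeta> where "\<zeta> = exp (2 * \<i> * complex_of_real (pi / n))"
  have sa: "sin \<alpha> \<noteq> 0" using a by (auto simp: sin_zero_iff_int2)
  have zi: "exp (2 * \<i> * complex_of_real ((\<alpha> + real i * pi) / real n)) = w * \<zeta> ^ i" for i
  proof -
    have "2 * \<i> * complex_of_real ((\<alpha> + real i * pi) / real n)
       = 2 * \<i> * complex_of_real (\<alpha> / n) + of_nat i * (2 * \<i> * complex_of_real (pi / n))"
      by (simp add: add_divide_distrib algebra_simps)
    thus ?thesis unfolding w_def \<zeta>_def by (simp only: exp_add exp_of_nat_mult)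
  qed
  have wn: "w ^ n = exp (2 * \<i> * complex_of_real \<alpha>)"
  proof -
    have "of_nat n * (2 * \<i> * complex_of_real (\<alpha> / n)) = 2 * \<i> * complex_of_real \<alpha>"
      using n by (simp add: field_simps)
    thus ?thesis unfolding w_def by (metis exp_of_nat_mult)
  qed
  have zn: "\<zeta> ^ n = 1"
  proof -
    have "of_nat n * (2 * \<i> * complex_of_real (pi / n)) = 2 * of_real pi * \<i>"
      using n by (simp add: field_simps)
    thus ?thesis unfolding \<zeta>_def by (metis exp_of_nat_mult exp_two_pi_i)
  qed
  have zj: "\<zeta> ^ j \<noteq> 1" if j: "0 < j" "j < n" for j
  proof
    assume "\<zeta> ^ j = 1"
    moreover have "\<zeta> ^ j = exp (\<i> * complex_of_real (2 * pi * real j / real n))"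
      unfolding \<zeta>_def exp_of_nat_mult[symmetric] by (simp add: field_simps)
    ultimately obtain k :: int where k: "2 * pi * real j / real n = of_int (2 * k) * pi"
      by (auto simp: exp_eq_1)
    then have "real j = of_int k * real n" using n by (simp add: field_simps)
    then have "of_int (int j) = (of_int (k * int n) :: real)" by simp
    then have jk: "int j = k * int n" by linarith
    show False
    proof (cases "k \<le> 0")
      case True then have "k * int n \<le> 0" by (simp add: mult_nonpos_nonneg)
      with jk j show False by simp
    next
      case False then have "k * int n \<ge> 1 * int n" by (intro mult_right_mono) auto
      with jk j show False by simp
    qed
  qed
  have W1: "w ^ n \<noteq> 1" using cot_exp(1)[OF sa] wn by simp
  have S: "(\<Sum>i<n. 1 / (1 - w * \<zeta> ^ i)) = of_nat n / (1 - w ^ n)"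
    by (rule sum_inv[OF n zn zj W1])
  have "complex_of_real (\<Sum>i<n. cot ((\<alpha> + real i * pi) / real n))
      = (\<Sum>i<n. \<i> * (1 - 2 * (1 / (1 - w * \<zeta> ^ i))))"
    unfolding of_real_sum
  proof (rule sum.cong[OF refl])
    fix i assume "i \<in> {..<n}"
    note st = sin_theta[OF n a, of i]
    have ne: "w * \<zeta> ^ i \<noteq> 1" using cot_exp(1)[OF st] zi by simp
    show "complex_of_real (cot ((\<alpha> + real i * pi) / real n)) = \<i> * (1 - 2 * (1 / (1 - w * \<zeta> ^ i)))"
      unfolding cot_exp(2)[OF st] zi using ne
      by (simp add: field_simps)
  qed
  also have "\<dots> = \<i> * (of_nat n - 2 * (of_nat n / (1 - w ^ n)))"
  proof -
    have "(\<Sum>i<n. 2 / (1 - w * \<zeta> ^ i)) = 2 * (\<Sum>i<n. 1 / (1 - w * \<zeta> ^ i))"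
      by (simp add: sum_distrib_left)
    then show ?thesis by (simp add: sum_subtractf sum_distrib_left[symmetric] S)
  qed
  also have "\<dots> = complex_of_real (real n * cot \<alpha>)"
    unfolding of_real_mult cot_exp(2)[OF sa] wn[symmetric] using W1
    by (simp add: field_simps)
  finally show ?thesis by (simp only: of_real_eq_iff)
qed



lemma DERIV_eq': "DERIV f x :> D \<Longrightarrow> D = E \<Longrightarrow> DERIV f x :> E"
  by simp

lemma DERIV_poly_cot:
  assumes "sin x \<noteq> 0"
  shows "DERIV (\<lambda>x. poly p (cot x)) x :> - poly ([:1,0,1:] * pderiv p) (cot x)"
proof -
  have "1 + cot x * cot x = inverse ((sin x)\<^sup>2)"
    using assms sin_cos_squared_add[of x] by (simp add: cot_def field_simps power2_eq_square)
  note e = this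
  show ?thesis
    by (intro DERIV_eq'[OF DERIV_chain2[OF poly_DERIV DERIV_cot[OF assms], of p]]) (simp add: e[symmetric] algebra_simps)
qed

lemma DERIV_poly_cot_theta:
  assumes "sin ((x + c) / real n) \<noteq> 0" "n \<ge> 1"
  shows "DERIV (\<lambda>x. poly p (cot ((x + c) / real n))) x :>
     - poly ([:1,0,1:] * pderiv p) (cot ((x + c) / real n)) / real n"
proof -
  have i: "DERIV (\<lambda>x. (x + c) / real n) x :> 1 / real n"
    using assms(2) by (auto intro!: derivative_eq_intros)
  show ?thesis
    using DERIV_chain2[OF DERIV_poly_cot[OF assms(1)] i, of p] by simp
qed

lemma aux_sum:
  fixes f :: "nat \<Rightarrow> real"
  assumes "(\<Sum>i<n. - f i / real n) = r * (- g)" "n \<ge> 1"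
  shows "(\<Sum>i<n. f i) = real n * r * g"
proof -
  have "(\<Sum>i<n. - f i / real n) = - (\<Sum>i<n. f i) / real n"
    by (simp add: sum_negf sum_divide_distrib[symmetric])
  with assms show ?thesis by (simp add: field_simps)
qed

lemma sumK:
  assumes n: "n \<ge> 1" and sa: "sin \<alpha> \<noteq> 0"
  shows "(\<Sum>i<n. poly (deriv_poly j) (cot ((\<alpha> + real i * pi) / real n)))
       = real n ^ Suc j * poly (deriv_poly j) (cot \<alpha>)"
  using sa
proof (induction j arbitrary: \<alpha>)
  case 0
  then have a: "\<forall>j::int. \<alpha> \<noteq> of_int j * pi" by (auto simp: sin_zero_iff_int2)
  show ?case using sum_cot[OF n a] by simp
next
  case (Suc j)
  define S where "S = {x::real. sin x \<noteq> 0}"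
  have oS: "open S" unfolding S_def
    by (rule open_Collect_neq) (auto intro!: continuous_intros)
  have aS: "\<alpha> \<in> S" using Suc.prems by (simp add: S_def)
  have st: "sin ((\<alpha> + real i * pi) / real n) \<noteq> 0" for i
    using sin_theta[OF n] Suc.prems by (auto simp: sin_zero_iff_int2)
  have DL: "DERIV (\<lambda>x. \<Sum>i<n. poly (deriv_poly j) (cot ((x + real i * pi) / real n))) \<alpha> :>
     (\<Sum>i<n. - poly (deriv_poly (Suc j)) (cot ((\<alpha> + real i * pi) / real n)) / real n)"
    by (rule DERIV_sum) (use DERIV_poly_cot_theta[OF st n] in simp)
  have DR: "DERIV (\<lambda>x. real n ^ Suc j * poly (deriv_poly j) (cot x)) \<alpha> :>
     real n ^ Suc j * (- poly (deriv_poly (Suc j)) (cot \<alpha>))"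
    using DERIV_cmult[OF DERIV_poly_cot[OF Suc.prems, of "deriv_poly j"]] by simp
  have DL': "DERIV (\<lambda>x. real n ^ Suc j * poly (deriv_poly j) (cot x)) \<alpha> :>
     (\<Sum>i<n. - poly (deriv_poly (Suc j)) (cot ((\<alpha> + real i * pi) / real n)) / real n)"
    by (rule has_field_derivative_transform_within_open[OF DL oS aS]) (simp add: S_def Suc.IH)
  have "(\<Sum>i<n. - poly (deriv_poly (Suc j)) (cot ((\<alpha> + real i * pi) / real n)) / real n)
     = real n ^ Suc j * (- poly (deriv_poly (Suc j)) (cot \<alpha>))"
    using DERIV_unique[OF DL' DR] .
  from aux_sum[OF this n] show ?case by simp
qed



theorem corollary6p3:
  fixes m n :: nat and \<alpha> :: real
  assumes "m \<ge> 1" and "n \<ge> 2" and "\<forall>j::int. \<alpha> \<noteq> of_int j * pi"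
  shows "(\<Sum>k<n. cot ((\<alpha> + real k * pi) / real n) ^ m)
    = (if even m then (-1) ^ (m div 2) * real n else 0)
      + 1 / fact (m - 1) * (\<Sum>k=1..m. real n ^ k * arctan_number m k * poly (deriv_poly (k - 1)) (cot \<alpha>))"
proof -
  have n1: "n \<ge> 1" using assms(2) by simp
  have sa: "sin \<alpha> \<noteq> 0" using assms(3) by (auto simp: sin_zero_iff_int2)
  have G: "Gp m m = smult (fact (m-1)) (monom 1 m - [:cc m:])" using Gthm[OF assms(1)] by simp
  have fz: "(fact (m-1) :: real) \<noteq> 0" by simp
  have tm: "t ^ m = cc m + 1 / fact (m-1) * (\<Sum>j<m. A m (Suc j) * poly (deriv_poly j) t)" for t
  proof -
    have "poly (Gp m m) t = (\<Sum>j<m. A m (Suc j) * poly (deriv_poly j) t)"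
      unfolding Gp_def by (simp add: poly_sum)
    moreover have "poly (Gp m m) t = fact (m-1) * (t ^ m - cc m)"
      unfolding G by (simp add: poly_monom)
    ultimately show ?thesis using fz by (simp add: field_simps)
  qed
  have "(\<Sum>k<n. cot ((\<alpha> + real k * pi) / real n) ^ m)
     = (\<Sum>k<n. cc m + 1 / fact (m-1) * (\<Sum>j<m. A m (Suc j) * poly (deriv_poly j) (cot ((\<alpha> + real k * pi) / real n))))"
    by (simp only: tm)
  also have "\<dots> = real n * cc m + 1 / fact (m-1) * (\<Sum>j<m. A m (Suc j) * (\<Sum>k<n. poly (deriv_poly j) (cot ((\<alpha> + real k * pi) / real n))))"
  proof -
    have "(\<Sum>k<n. \<Sum>j<m. A m (Suc j) * poly (deriv_poly j) (cot ((\<alpha> + real k * pi) / real n)))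
       = (\<Sum>j<m. A m (Suc j) * (\<Sum>k<n. poly (deriv_poly j) (cot ((\<alpha> + real k * pi) / real n))))"
      by (subst sum.swap) (simp add: sum_distrib_left)
    then show ?thesis by (simp add: sum.distrib sum_divide_distrib[symmetric])
  qed
  also have "\<dots> = real n * cc m + 1 / fact (m-1) * (\<Sum>j<m. A m (Suc j) * (real n ^ Suc j * poly (deriv_poly j) (cot \<alpha>)))"
    by (simp only: sumK[OF n1 sa])
  also have "(\<Sum>j<m. A m (Suc j) * (real n ^ Suc j * poly (deriv_poly j) (cot \<alpha>)))
     = (\<Sum>k=1..m. real n ^ k * arctan_number m k * poly (deriv_poly (k - 1)) (cot \<alpha>))"
    by (simp add: sum.atLeast1_atMost_eq mult_ac)
  also have "real n * cc m = (if even m then (-1) ^ (m div 2) * real n else 0)"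
    by (simp add: cc_def)
  finally show ?thesis .
qed

end
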